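(* Let $n\ge1$, $\mu>0$, and consider $\min_{x\in\mathcal S^{n-1}} f(x)+\mu\|x\|_1$, where $\mathcal S^{n-1}=\{x\in\mathbb R^n:x^\top x=1\}$. Let $x^*$ be a local optimal solution and let $y^*\in\mathbb R^n$ satisfy $\Pi_{x^*}(\nabla f(x^* )+y^* )=0$ and $y^*\in\mu\partial\|x^*\|_1$. Then $$T_{x^*}\mathcal S^{n-1}+\mathcal C_{\theta,g_1}(x^*,y^* )=\mathbb R^n,$$ i.e. the M-SRCQ holds at $x^*$ with respect to $y^*$, and consequently $y^*$ is the unique vector satisfying these two conditions at $x^*$.
   Context: $f$ is a smooth function on an open set of $\mathbb R^n$ containing the unit sphere $\mathcal S^{n-1}$ (viewed as a Riemannian submanifold of $\mathbb R^n$), with Euclidean gradient $\nabla f$. $T_x\mathcal S^{n-1}=\{\xi:x^\top\xi=0\}$ and $\Pi_x(v)=v-xx^\top v$ is the orthogonal projection onto it. $\partial\|\cdot\|_1$ is the convex subdifferential. With $\theta=\mu\|\cdot\|_1$ and $g_1(x)=x$, $\theta^\downarrow(x;d)=\mu\sum_{x_i=0}|d_i|+\mu\sum_{x_i>0}d_i-\mu\sum_{x_i<0}d_i$ and $\mathcal C_{\theta,g_1}(x,y)=\{d\in\mathbb R^n:\theta^\downarrow(x;d)=\langle d,y\rangle\}$. *)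

theory Defs
  imports "HOL-Analysis.Analysis"
begin

text \<open>Vectors in R^n are modelled as real^'n (n = CARD('n) \<ge> 1).\<close>

definition l1norm :: "real^'n \<Rightarrow> real" where
  "l1norm x = (\<Sum>i\<in>UNIV. \<bar>x $ i\<bar>)"

definition subdiff :: "(real^'n \<Rightarrow> real) \<Rightarrow> real^'n \<Rightarrow> (real^'n) set" where
  "subdiff g x = {v. \<forall>z. g z \<ge> g x + v \<bullet> (z - x)}"

definition unit_sph :: "(real^'n) set" where
  "unit_sph = {x. x \<bullet> x = 1}"

definition tangent_sph :: "real^'n \<Rightarrow> (real^'n) set" where
  "tangent_sph x = {\<xi>. x \<bullet> \<xi> = 0}"

definition proj_tan :: "real^'n \<Rightarrow> real^'n \<Rightarrow> real^'n" where
  "proj_tan x v = v - (x \<bullet> v) *\<^sub>R x"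

text \<open>theta-down(x;d) for theta = mu * l1-norm.\<close>
definition theta_down :: "real \<Rightarrow> real^'n \<Rightarrow> real^'n \<Rightarrow> real" where
  "theta_down \<mu> x d =
     \<mu> * (\<Sum>i\<in>{i. x $ i = 0}. \<bar>d $ i\<bar>) + \<mu> * (\<Sum>i\<in>{i. x $ i > 0}. d $ i)
     - \<mu> * (\<Sum>i\<in>{i. x $ i < 0}. d $ i)"

definition crit_cone :: "real \<Rightarrow> real^'n \<Rightarrow> real^'n \<Rightarrow> (real^'n) set" where
  "crit_cone \<mu> x y = {d. theta_down \<mu> x d = d \<bullet> y}"

text \<open>Smoothness (C^infinity) on an open set U: f lies in a family of functions
  that are continuous on U and closed under taking partial derivatives on U,
  i.e. all partial derivatives of all orders exist on U and are continuous.\<close>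
definition smooth_on :: "(real^'n) set \<Rightarrow> (real^'n \<Rightarrow> real) \<Rightarrow> bool" where
  "smooth_on U f \<longleftrightarrow> (\<exists>S. f \<in> S \<and>
      (\<forall>g\<in>S. continuous_on U g) \<and>
      (\<forall>g\<in>S. \<forall>i. \<exists>h\<in>S. \<forall>x\<in>U.
          ((\<lambda>t. g (x + t *\<^sub>R axis i 1)) has_real_derivative h x) (at 0)))"

end

theory Submission
  imports Defs
begin

lemma l1_axis: "l1norm (x + t *\<^sub>R axis i 1) = l1norm x + \<bar>x $ i + t\<bar> - \<bar>x $ i\<bar>"
proof -
  have A: "\<And>g::'a \<Rightarrow> real. sum g UNIV = g i + sum g (UNIV - {i})"
    by (simp add: sum.remove)
  have B: "sum (\<lambda>j. \<bar>(x + t *\<^sub>R axis i 1) $ j\<bar>) (UNIV - {i}) = sum (\<lambda>j. \<bar>x $ j\<bar>) (UNIV - {i})"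
    by (rule sum.cong) (auto simp: axis_def)
  show ?thesis unfolding l1norm_def
    using A[of "\<lambda>j. \<bar>(x + t *\<^sub>R axis i 1) $ j\<bar>"] A[of "\<lambda>j. \<bar>x $ j\<bar>"] B
    by (simp add: axis_def add.commute)
qed

lemma subdiff_sgn:
  assumes "v \<in> subdiff l1norm x" "x $ i \<noteq> 0"
  shows "v $ i = sgn (x $ i)"
proof -
  have H: "v $ i * t \<le> \<bar>x $ i + t\<bar> - \<bar>x $ i\<bar>" for t
  proof -
    have "l1norm (x + t *\<^sub>R axis i 1) \<ge> l1norm x + v \<bullet> (x + t *\<^sub>R axis i 1 - x)"
      using assms(1) unfolding subdiff_def by blast
    moreover have "v \<bullet> (x + t *\<^sub>R axis i 1 - x) = v $ i * t"
      by (simp add: inner_axis)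
    moreover have "v \<bullet> axis i 1 = v $ i" by (simp add: inner_axis)
    ultimately show ?thesis using l1_axis[of x t i] by (simp add: mult.commute)
  qed
  have h1: "v $ i * (x $ i / 2) \<le> \<bar>x $ i + x $ i / 2\<bar> - \<bar>x $ i\<bar>" by (rule H)
  have h2: "v $ i * (- x $ i / 2) \<le> \<bar>x $ i + - x $ i / 2\<bar> - \<bar>x $ i\<bar>" by (rule H)
  show ?thesis
  proof (cases "x $ i > 0")
    case True
    then have "v $ i * x $ i \<le> x $ i" "- (v $ i * x $ i) \<le> - x $ i" using h1 h2 by auto
    then have "v $ i * x $ i = 1 * x $ i" by simp
    then show ?thesis using True by simp
  next
    case False
    then have F: "x $ i < 0" using assms(2) by simp
    then have "v $ i * x $ i \<le> - x $ i" "- (v $ i * x $ i) \<le> x $ i" using h1 h2 by auto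
    then have "(v $ i + 1) * x $ i = 0" by (simp add: algebra_simps)
    then show ?thesis using F by simp
  qed
qed

lemma sum_filter_univ: "(\<Sum>i\<in>{i. P i}. g i) = (\<Sum>i\<in>UNIV. if P i then g i else (0::real))"
  for g :: "'n::finite \<Rightarrow> real"
  using sum.inter_filter[of "UNIV::'n set" g P] by simp

theorem proposition7:
  fixes f :: "real^'n \<Rightarrow> real" and gradf :: "real^'n \<Rightarrow> real^'n"
    and U :: "(real^'n) set" and \<mu> :: real and xs ys :: "real^'n"
  assumes U_open: "open U" and U_sph: "unit_sph \<subseteq> U"
    and f_smooth: "smooth_on U f"
    and f_grad: "\<forall>x\<in>U. (f has_derivative (\<lambda>h. gradf x \<bullet> h)) (at x)"
    and mu_pos: "\<mu> > 0"
    and xs_sph: "xs \<in> unit_sph"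
    and xs_locmin: "\<exists>\<epsilon>>0. \<forall>x\<in>unit_sph. dist x xs < \<epsilon> \<longrightarrow>
                      f xs + \<mu> * l1norm xs \<le> f x + \<mu> * l1norm x"
    and ys_stat: "proj_tan xs (gradf xs + ys) = 0"
    and ys_sub: "ys \<in> (\<lambda>v. \<mu> *\<^sub>R v) ` subdiff l1norm xs"
  shows "{a + b | a b. a \<in> tangent_sph xs \<and> b \<in> crit_cone \<mu> xs ys} = UNIV
       \<and> (\<forall>y. proj_tan xs (gradf xs + y) = 0 \<and> y \<in> (\<lambda>v. \<mu> *\<^sub>R v) ` subdiff l1norm xs
              \<longrightarrow> y = ys)"
proof
  obtain w where w: "w \<in> subdiff l1norm xs" "ys = \<mu> *\<^sub>R w" using ys_sub by blast
  have ysi: "ys $ j = \<mu> * sgn (xs $ j)" if "xs $ j \<noteq> 0" for j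
    using subdiff_sgn[OF w(1) that] w(2) by simp
  show "{a + b | a b. a \<in> tangent_sph xs \<and> b \<in> crit_cone \<mu> xs ys} = UNIV"
  proof (intro set_eqI iffI)
    fix v :: "real^'n"
    assume "v \<in> UNIV"
    define a where "a = (\<chi> j. if xs $ j = 0 then v $ j else 0)"
    define b where "b = (\<chi> j. if xs $ j = 0 then 0 else v $ j)"
    have "v = a + b" unfolding a_def b_def by (simp add: vec_eq_iff)
    moreover have "a \<in> tangent_sph xs"
      unfolding tangent_sph_def a_def inner_vec_def by (simp add: sum.neutral)
    moreover have "b \<in> crit_cone \<mu> xs ys"
    proof -
      have "theta_down \<mu> xs b = (\<Sum>j\<in>UNIV. \<mu> * (if xs $ j = 0 then \<bar>b $ j\<bar> else 0))
              + (\<Sum>j\<in>UNIV. \<mu> * (if xs $ j > 0 then b $ j else 0))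
              - (\<Sum>j\<in>UNIV. \<mu> * (if xs $ j < 0 then b $ j else 0))"
        unfolding theta_down_def sum_filter_univ sum_distrib_left by simp
      also have "\<dots> = (\<Sum>j\<in>UNIV. \<mu> * (if xs $ j = 0 then \<bar>b $ j\<bar> else 0)
              + \<mu> * (if xs $ j > 0 then b $ j else 0)
              - \<mu> * (if xs $ j < 0 then b $ j else 0))"
        by (simp add: sum.distrib sum_subtractf)
      also have "\<dots> = (\<Sum>j\<in>UNIV. b $ j * ys $ j)"
      proof (rule sum.cong)
        fix j :: 'n
        show "\<mu> * (if xs $ j = 0 then \<bar>b $ j\<bar> else 0)
              + \<mu> * (if xs $ j > 0 then b $ j else 0)
              - \<mu> * (if xs $ j < 0 then b $ j else 0) = b $ j * ys $ j"
        proof (cases "xs $ j = 0")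
          case True then show ?thesis by (simp add: b_def)
        next
          case False
          then show ?thesis using ysi[OF False]
            by (cases "xs $ j > 0") (auto simp: b_def)
        qed
      qed simp
      also have "\<dots> = b \<bullet> ys" by (simp add: inner_vec_def)
      finally show ?thesis unfolding crit_cone_def by simp
    qed
    ultimately show "v \<in> {a + b | a b. a \<in> tangent_sph xs \<and> b \<in> crit_cone \<mu> xs ys}"
      by blast
  qed simp
  show "\<forall>y. proj_tan xs (gradf xs + y) = 0 \<and> y \<in> (\<lambda>v. \<mu> *\<^sub>R v) ` subdiff l1norm xs
              \<longrightarrow> y = ys"
  proof (intro allI impI)
    fix y
    assume A: "proj_tan xs (gradf xs + y) = 0 \<and> y \<in> (\<lambda>v. \<mu> *\<^sub>R v) ` subdiff l1norm xs"
    obtain u where u: "u \<in> subdiff l1norm xs" "y = \<mu> *\<^sub>R u" using A by blast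
    have yi: "y $ j = \<mu> * sgn (xs $ j)" if "xs $ j \<noteq> 0" for j
      using subdiff_sgn[OF u(1) that] u(2) by simp
    define k where "k = xs \<bullet> (gradf xs + y) - xs \<bullet> (gradf xs + ys)"
    have "gradf xs + y = (xs \<bullet> (gradf xs + y)) *\<^sub>R xs"
      using A unfolding proj_tan_def by (metis eq_iff_diff_eq_0)
    moreover have "gradf xs + ys = (xs \<bullet> (gradf xs + ys)) *\<^sub>R xs"
      using ys_stat unfolding proj_tan_def by (metis eq_iff_diff_eq_0)
    ultimately have D0: "y - ys = (xs \<bullet> (gradf xs + y)) *\<^sub>R xs - (xs \<bullet> (gradf xs + ys)) *\<^sub>R xs"
      by (metis add_diff_cancel_left)
    have D: "y - ys = k *\<^sub>R xs" unfolding k_def D0 by (simp only: scaleR_left_diff_distrib)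
    have "xs \<noteq> 0" using xs_sph unfolding unit_sph_def by auto
    then obtain i where i: "xs $ i \<noteq> 0" by (metis vec_eq_iff zero_index)
    have "(y - ys) $ i = 0" using yi[OF i] ysi[OF i] by simp
    then have "(k *\<^sub>R xs) $ i = 0" using D by simp
    then have "k * xs $ i = 0" by simp
    then have "k = 0" using i by simp
    then show "y = ys" using D by simp
  qed
qed

end
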